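(* Let $\mathbf D\in\mathbb R^{d\times d}$ be symmetric with $\mathrm{Id}\le\mathbf D\le\lambda\,\mathrm{Id}$ (with $\lambda$ the upper bound of the rates $c_b$ in the context). Then there exists a symmetric exclusion process (with finitely supported symmetric jump rates $Q$) whose diffusion matrix is $\mathbf D$. Moreover, there is a constant $C=C(d,\lambda)<\infty$ such that for every $F\in L^2(\mathcal X,\mathbb P_\rho)$, $$\langle F(-\bar{\mathcal L})F\rangle_\rho\ge\frac18\sum_{b}\langle(\pi_bF)^2\rangle_\rho,\qquad \langle F(-\bar{\mathcal L})F\rangle_\rho\le C\,\langle F(-\mathcal L)F\rangle_\rho,$$ where $\bar{\mathcal L}$ is the generator of this symmetric exclusion process and the first sum runs over all nearest-neighbour bonds of $\mathbb Z^d$.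
   Context: $\mathcal X=\{0,1\}^{\mathbb Z^d}$, $\pi_{x,y}F(\eta)=F(\eta^{x,y})-F(\eta)$ where $\eta^{x,y}$ exchanges the values at $x,y$; $\pi_b=\pi_{x,y}$ for a nearest-neighbour bond $b=\{x,y\}$. $\mathbb P_\rho$ is the Bernoulli$(\rho)$ product measure, $\rho\in(0,1)$, $\langle\cdot\rangle_\rho$ its expectation. The non-gradient generator is $\mathcal L=\sum_b c_b\pi_b$ with rates $c_{x,y}=c_{y,x}$ that depend only on $\{\eta_z:|z-x|\le\mathbf r\}$, satisfy $1\le c_{x,y}\le\lambda$, $c_{x,y}=\tau_xc_{0,y-x}$ (with $(\tau_x F)(\eta)=F(\eta_{x+\cdot})$), and do not depend on $\eta_x,\eta_y$; thus $\langle F(-\mathcal L)F\rangle_\rho=\frac12\sum_b\langle c_b(\pi_bF)^2\rangle_\rho$. A symmetric exclusion process (SEP) with jump rates $Q:\mathbb Z^d\to[0,\infty)$, finitely supported and with $Q_y=Q_{-y}$, has generator $\bar{\mathcal L}=\frac12\sum_{x\in\mathbb Z^d}\sum_{y\in\mathbb Z^d}Q_{y-x}\pi_{x,y}$, and its diffusion matrix is $\frac12\sum_{y}Q_y\,yy^{\mathsf T}$. *)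

theory Defs
  imports "HOL-Probability.Probability"
begin

text \<open>Sites of Z^d are int^'d (the dimension d = CARD('d)); configurations are
  maps from sites to bool (eta_x = 1 iff True).\<close>

type_synonym 'd site = "int ^ 'd"
type_synonym 'd config = "'d site \<Rightarrow> bool"

definition bern :: "real \<Rightarrow> 'd::finite config measure" where
  "bern \<rho> = (\<Pi>\<^sub>M z\<in>UNIV. measure_pmf (bernoulli_pmf \<rho>))"

definition exch :: "'d::finite site \<Rightarrow> 'd site \<Rightarrow> 'd config \<Rightarrow> 'd config" where
  "exch x y \<eta> = (\<lambda>z. if z = x then \<eta> y else if z = y then \<eta> x else \<eta> z)"

definition piF :: "'d::finite site \<Rightarrow> 'd site \<Rightarrow> ('d config \<Rightarrow> real) \<Rightarrow> 'd config \<Rightarrow> real" where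
  "piF x y F \<eta> = F (exch x y \<eta>) - F \<eta>"

text \<open>Unit vector e_i; every nearest-neighbour bond is uniquely {x, x + e_i}.\<close>
definition unitv :: "'d::finite \<Rightarrow> 'd site" where
  "unitv i = (\<chi> j. if j = i then 1 else 0)"

definition nearest :: "'d::finite site \<Rightarrow> 'd site \<Rightarrow> bool" where
  "nearest x y \<longleftrightarrow> (\<Sum>i\<in>UNIV. \<bar>x $ i - y $ i\<bar>) = 1"

definition rvec :: "'d::finite site \<Rightarrow> real ^ 'd" where
  "rvec z = (\<chi> i. real_of_int (z $ i))"

definition shift :: "'d::finite site \<Rightarrow> 'd config \<Rightarrow> 'd config" where
  "shift x \<eta> = (\<lambda>z. \<eta> (x + z))"

definition admissible_rates ::
  "real \<Rightarrow> real \<Rightarrow> ('d::finite site \<Rightarrow> 'd site \<Rightarrow> 'd config \<Rightarrow> real) \<Rightarrow> bool" where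
  "admissible_rates lam r c \<longleftrightarrow>
     (\<forall>x y \<eta>. nearest x y \<longrightarrow>
        c x y \<eta> = c y x \<eta>
      \<and> 1 \<le> c x y \<eta> \<and> c x y \<eta> \<le> lam
      \<and> c x y \<eta> = c 0 (y - x) (shift x \<eta>)
      \<and> (\<forall>b. c x y (\<eta>(x := b)) = c x y \<eta> \<and> c x y (\<eta>(y := b)) = c x y \<eta>)
      \<and> (\<forall>\<eta>'. (\<forall>z. norm (rvec (z - x)) \<le> r \<longrightarrow> \<eta>' z = \<eta> z) \<longrightarrow> c x y \<eta>' = c x y \<eta>))"

text \<open>Dirichlet form <F(-L)F>_rho = 1/2 sum_b <c_b (pi_b F)^2>_rho (bonds b = {x, x+e_i}).\<close>
definition ng_form :: "('d::finite site \<Rightarrow> 'd site \<Rightarrow> 'd config \<Rightarrow> real) \<Rightarrow> real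
     \<Rightarrow> ('d config \<Rightarrow> real) \<Rightarrow> ennreal" where
  "ng_form c \<rho> F = (\<Sum>\<^sub>\<infinity>(x, i)\<in>UNIV.
      ennreal (1/2) * (\<integral>\<^sup>+ \<eta>. ennreal (c x (x + unitv i) \<eta> * (piF x (x + unitv i) F \<eta>)\<^sup>2) \<partial>bern \<rho>))"

definition bond_energy :: "real \<Rightarrow> ('d::finite config \<Rightarrow> real) \<Rightarrow> ennreal" where
  "bond_energy \<rho> F = (\<Sum>\<^sub>\<infinity>(x, i)\<in>UNIV.
      (\<integral>\<^sup>+ \<eta>. ennreal ((piF x (x + unitv i) F \<eta>)\<^sup>2) \<partial>bern \<rho>))"

text \<open>Dirichlet form of the SEP with generator 1/2 sum_x sum_y Q_{y-x} pi_{x,y}: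
  <F(-Lbar)F>_rho = 1/4 sum_x sum_y Q_{y-x} <(pi_{x,y}F)^2>_rho.\<close>
definition sep_form :: "('d::finite site \<Rightarrow> real) \<Rightarrow> real \<Rightarrow> ('d config \<Rightarrow> real) \<Rightarrow> ennreal" where
  "sep_form Q \<rho> F = (\<Sum>\<^sub>\<infinity>(x, y)\<in>UNIV.
      ennreal (Q (y - x) / 4) * (\<integral>\<^sup>+ \<eta>. ennreal ((piF x y F \<eta>)\<^sup>2) \<partial>bern \<rho>))"

definition sep_rates :: "('d::finite site \<Rightarrow> real) \<Rightarrow> bool" where
  "sep_rates Q \<longleftrightarrow> (\<forall>y. 0 \<le> Q y \<and> Q y = Q (- y)) \<and> finite {y. Q y \<noteq> 0}"

definition diffusion_matrix :: "('d::finite site \<Rightarrow> real) \<Rightarrow> real ^ 'd ^ 'd" where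
  "diffusion_matrix Q = (\<chi> i j. (1/2) * (\<Sum>y\<in>{y. Q y \<noteq> 0}.
       Q y * real_of_int (y $ i) * real_of_int (y $ j)))"

definition loewner_le :: "real ^ 'd ^ 'd \<Rightarrow> real ^ 'd ^ 'd \<Rightarrow> bool" where
  "loewner_le A B \<longleftrightarrow> (\<forall>v. v \<bullet> (A *v v) \<le> v \<bullet> (B *v v))"

definition L2 :: "real \<Rightarrow> ('d::finite config \<Rightarrow> real) \<Rightarrow> bool" where
  "L2 \<rho> F \<longleftrightarrow> F \<in> borel_measurable (bern \<rho>) \<and> integrable (bern \<rho>) (\<lambda>\<eta>. (F \<eta>)\<^sup>2)"

end

theory Submission
  imports Defs
begin


definition outer :: "real^'n::finite \<Rightarrow> real^'n^'n" where
  "outer w = (\<chi> i j. w$i * w$j)"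

definition crep :: "('a \<Rightarrow> real^'n::finite^'n) \<Rightarrow> real^'n^'n \<Rightarrow> bool" where
  "crep g M \<longleftrightarrow> (\<exists>c. (\<forall>a. 0 \<le> c a) \<and> finite {a. c a \<noteq> 0} \<and> M = (\<Sum>a\<in>{a. c a \<noteq> 0}. c a *\<^sub>R g a))"

lemma crep_intro:
  assumes "finite S" "\<And>a. a \<in> S \<Longrightarrow> 0 \<le> c a"
  shows "crep g (\<Sum>a\<in>S. c a *\<^sub>R g a)"
proof -
  define c' where "c' a = (if a \<in> S then c a else 0)" for a
  have sub: "{a. c' a \<noteq> 0} \<subseteq> S" by (auto simp: c'_def split: if_splits)
  have fin: "finite {a. c' a \<noteq> 0}" using finite_subset[OF sub assms(1)] .
  have "(\<Sum>a\<in>S. c a *\<^sub>R g a) = (\<Sum>a\<in>S. c' a *\<^sub>R g a)" by (simp add: c'_def)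
  also have "\<dots> = (\<Sum>a\<in>{a. c' a \<noteq> 0}. c' a *\<^sub>R g a)"
    by (rule sum.mono_neutral_right[OF assms(1) sub]) auto
  finally show ?thesis unfolding crep_def using fin assms(2)
    by (intro exI[of _ c']) (auto simp: c'_def)
qed

lemma crepD:
  assumes "crep g M"
  shows "\<exists>S c. finite S \<and> (\<forall>a\<in>S. 0 \<le> c a) \<and> M = (\<Sum>a\<in>S. c a *\<^sub>R g a)"
proof -
  obtain c where "(\<forall>a. 0 \<le> c a)" "finite {a. c a \<noteq> 0}" "M = (\<Sum>a\<in>{a. c a \<noteq> 0}. c a *\<^sub>R g a)"
    using assms unfolding crep_def by blast
  then show ?thesis by (intro exI[of _ "{a. c a \<noteq> 0}"] exI[of _ c]) auto
qed

lemma crep_zero: "crep g 0"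
  using crep_intro[of "{}" ] by simp

lemma crep_single: "0 \<le> k \<Longrightarrow> crep g (k *\<^sub>R g a)"
  using crep_intro[of "{a}" "\<lambda>_. k" g] by simp

lemma crep_add:
  assumes "crep g A" "crep g B" shows "crep g (A + B)"
proof -
  obtain S1 c1 where 1: "finite S1" "\<forall>a\<in>S1. 0 \<le> c1 a" "A = (\<Sum>a\<in>S1. c1 a *\<^sub>R g a)"
    using crepD[OF assms(1)] by blast
  obtain S2 c2 where 2: "finite S2" "\<forall>a\<in>S2. 0 \<le> c2 a" "B = (\<Sum>a\<in>S2. c2 a *\<^sub>R g a)"
    using crepD[OF assms(2)] by blast
  define d1 where "d1 a = (if a \<in> S1 then c1 a else 0)" for a
  define d2 where "d2 a = (if a \<in> S2 then c2 a else 0)" for a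
  have "A = (\<Sum>a\<in>S1 \<union> S2. d1 a *\<^sub>R g a)"
    unfolding 1(3) using 1(1) 2(1)
    by (intro sum.mono_neutral_cong_left) (auto simp: d1_def)
  moreover have "B = (\<Sum>a\<in>S1 \<union> S2. d2 a *\<^sub>R g a)"
    unfolding 2(3) using 1(1) 2(1)
    by (intro sum.mono_neutral_cong_left) (auto simp: d2_def)
  ultimately have "A + B = (\<Sum>a\<in>S1 \<union> S2. (d1 a + d2 a) *\<^sub>R g a)"
    by (simp add: sum.distrib scaleR_add_left)
  moreover have "\<And>a. a \<in> S1 \<union> S2 \<Longrightarrow> 0 \<le> d1 a + d2 a"
    using 1(2) 2(2) by (auto simp: d1_def d2_def)
  ultimately show ?thesis using 1(1) 2(1) crep_intro[of "S1 \<union> S2" "\<lambda>a. d1 a + d2 a" g] by simp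
qed

lemma crep_scale:
  assumes "crep g A" "0 \<le> k" shows "crep g (k *\<^sub>R A)"
proof -
  obtain S c where 1: "finite S" "\<forall>a\<in>S. 0 \<le> c a" "A = (\<Sum>a\<in>S. c a *\<^sub>R g a)"
    using crepD[OF assms(1)] by blast
  have "k *\<^sub>R A = (\<Sum>a\<in>S. (k * c a) *\<^sub>R g a)" unfolding 1(3)
    by (simp add: scaleR_sum_right)
  then show ?thesis using 1 assms(2) by (simp add: crep_intro)
qed

lemma crep_sum:
  assumes "finite I" "\<And>i. i \<in> I \<Longrightarrow> crep g (h i)" shows "crep g (\<Sum>i\<in>I. h i)"
  using assms by (induction I rule: finite_induct) (auto intro: crep_add crep_zero)



lemma qf_expand: "v \<bullet> (D *v v) = (\<Sum>i\<in>UNIV. \<Sum>j\<in>UNIV. v$i * D$i$j * v$j)"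
  by (simp add: inner_vec_def matrix_vector_mult_def sum_distrib_left mult.assoc)

lemma inner_expand: "v \<bullet> (w::real^'n) = (\<Sum>i\<in>UNIV. v$i * w$i)"
  by (simp add: inner_vec_def)

definition pd_on :: "'n::finite set \<Rightarrow> real^'n^'n \<Rightarrow> real \<Rightarrow> bool" where
  "pd_on S D m \<longleftrightarrow> (\<forall>v. (\<forall>i. i \<notin> S \<longrightarrow> v$i = 0) \<longrightarrow> m * (v \<bullet> v) \<le> v \<bullet> (D *v v))"

definition supp_on :: "'n::finite set \<Rightarrow> real^'n^'n \<Rightarrow> bool" where
  "supp_on S D \<longleftrightarrow> (\<forall>i j. i \<notin> S \<or> j \<notin> S \<longrightarrow> D$i$j = 0)"

lemma if01_mult[simp]: "(if P then 1 else 0) * (x::real) = (if P then x else 0)"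
  "x * (if P then 1 else 0) = (if P then x else 0)"
  by auto

lemma sum_if_out[simp]: "(\<Sum>j\<in>A. if P then f j else 0) = (if P then (\<Sum>j\<in>A. f j) else (0::real))"
  by auto

lemma outer_nth[simp]: "outer w $ i $ j = w$i * w$j"
  by (simp add: outer_def)

lemma chol_step:
  fixes D :: "real^'n::finite^'n"
  assumes sym: "\<And>i j. D$i$j = D$j$i" and supp: "supp_on (insert k T) D" and kT: "k \<notin> T"
    and m: "0 < m" and pd: "pd_on (insert k T) D m"
  defines "a \<equiv> D$k$k"
  defines "Sc \<equiv> D - (1/a) *\<^sub>R outer (D$k)"
  shows "0 < a" "D = Sc + (1/a) *\<^sub>R outer (D$k)" "\<And>i j. Sc$i$j = Sc$j$i"
    "supp_on T Sc" "pd_on T Sc m"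
proof -
  define e :: "real^'n" where "e = (\<chi> i. if i = k then 1 else 0)"
  have "m * (e \<bullet> e) \<le> e \<bullet> (D *v e)" using pd unfolding pd_on_def by (auto simp: e_def)
  moreover have "e \<bullet> e = 1" by (simp add: inner_expand e_def if_distrib cong: if_cong)
  moreover have "e \<bullet> (D *v e) = a" by (simp add: qf_expand e_def a_def)
  ultimately have am: "m \<le> a" by simp
  then show apos: "0 < a" using m by simp
  show "D = Sc + (1/a) *\<^sub>R outer (D$k)" by (simp add: Sc_def)
  have Sc_nth: "Sc$i$j = D$i$j - (1/a) * D$k$i * D$k$j" for i j
    by (simp add: Sc_def)
  show "\<And>i j. Sc$i$j = Sc$j$i" using sym by (simp add: Sc_nth)
  have z: "Sc$i$j = 0" if "i \<notin> T" for i j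
  proof (cases "i = k")
    case True then show ?thesis using apos by (simp add: Sc_nth a_def)
  next
    case False
    then have "i \<notin> insert k T" using that by simp
    then have "D$i$j = 0" "D$k$i = 0" using supp sym unfolding supp_on_def by metis+
    then show ?thesis by (simp add: Sc_nth)
  qed
  show "supp_on T Sc" unfolding supp_on_def
    using z \<open>\<And>i j. Sc$i$j = Sc$j$i\<close> by metis
  show "pd_on T Sc m" unfolding pd_on_def
  proof (intro allI impI)
    fix v :: "real^'n" assume vT: "\<forall>i. i \<notin> T \<longrightarrow> v$i = 0"
    have vk: "v$k = 0" using vT kT by simp
    define s where "s = (\<Sum>j\<in>UNIV. D$k$j * v$j)"
    define t where "t = s / a"
    define u where "u = v - t *\<^sub>R e"
    have u_nth: "u$i = v$i - (if i = k then t else 0)" for i by (simp add: u_def e_def)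
    have uS: "\<forall>i. i \<notin> insert k T \<longrightarrow> u$i = 0" using vT by (simp add: u_nth)
    have "m * (u \<bullet> u) \<le> u \<bullet> (D *v u)" using pd uS unfolding pd_on_def by blast
    have uu: "u \<bullet> u = v \<bullet> v + t^2"
    proof -
      have "u \<bullet> u = (\<Sum>i\<in>UNIV. v$i * v$i - (if i = k then 2 * t * v$i else 0) + (if i = k then t^2 else 0))"
        unfolding inner_expand by (rule sum.cong[OF refl]) (auto simp: u_nth power2_eq_square algebra_simps)
      also have "\<dots> = v \<bullet> v + t^2"
        by (simp add: sum.distrib sum_subtractf inner_expand vk)
      finally show ?thesis .
    qed
    have quD: "u \<bullet> (D *v u) = v \<bullet> (D *v v) - 2 * t * s + t^2 * a"
    proof -
      have "u \<bullet> (D *v u) = (\<Sum>i\<in>UNIV. \<Sum>j\<in>UNIV. v$i * D$i$j * v$j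
          - (if i = k then t * D$k$j * v$j else 0) - (if j = k then t * v$i * D$i$k else 0)
          + (if i = k then (if j = k then t^2 * a else 0) else 0))"
        unfolding qf_expand by (intro sum.cong[OF refl]) (auto simp: u_nth power2_eq_square algebra_simps a_def)
      also have "\<dots> = v \<bullet> (D *v v) - t * s - t * (\<Sum>i\<in>UNIV. v$i * D$i$k) + t^2 * a"
        by (simp add: sum.distrib sum_subtractf qf_expand s_def sum_distrib_left mult.assoc)
      also have "(\<Sum>i\<in>UNIV. v$i * D$i$k) = s"
        unfolding s_def by (rule sum.cong) (auto simp: sym[of _ k])
      finally show ?thesis by simp
    qed
    have qSc: "v \<bullet> (Sc *v v) = v \<bullet> (D *v v) - s^2 / a"
    proof -
      have "v \<bullet> (Sc *v v) = (\<Sum>i\<in>UNIV. \<Sum>j\<in>UNIV. v$i * D$i$j * v$j - (1/a) * ((D$k$i * v$i) * (D$k$j * v$j)))"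
        unfolding qf_expand by (intro sum.cong[OF refl]) (auto simp: Sc_nth algebra_simps)
      also have "\<dots> = v \<bullet> (D *v v) - (1/a) * (\<Sum>i\<in>UNIV. \<Sum>j\<in>UNIV. (D$k$i * v$i) * (D$k$j * v$j))"
        by (simp add: sum_subtractf qf_expand sum_distrib_left)
      also have "(\<Sum>i\<in>UNIV. \<Sum>j\<in>UNIV. (D$k$i * v$i) * (D$k$j * v$j)) = s * s"
        by (simp add: s_def sum_product)
      finally show ?thesis by (simp add: power2_eq_square)
    qed
    have "u \<bullet> (D *v u) = v \<bullet> (Sc *v v)"
      using apos by (simp add: quD qSc t_def power2_eq_square field_simps)
    moreover have "m * (v \<bullet> v) \<le> m * (u \<bullet> u)" using uu m by simp
    ultimately show "m * (v \<bullet> v) \<le> v \<bullet> (Sc *v v)"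
      using \<open>m * (u \<bullet> u) \<le> u \<bullet> (D *v u)\<close> by linarith
  qed
qed



lemma chol:
  fixes D :: "real^'n::finite^'n"
  assumes "finite S"
  shows "(\<forall>i j. D$i$j = D$j$i) \<Longrightarrow> supp_on S D \<Longrightarrow> 0 < m \<Longrightarrow> pd_on S D m \<Longrightarrow> crep outer D"
  using assms
proof (induction S arbitrary: D rule: finite_induct)
  case empty
  then have "D = 0" unfolding supp_on_def by (simp add: vec_eq_iff)
  then show ?case by (simp add: crep_zero)
next
  case (insert k T)
  define a where "a = D$k$k"
  define Sc where "Sc = D - (1/a) *\<^sub>R outer (D$k)"
  note st = chol_step[of D k T m, folded a_def, folded Sc_def]
  have sym: "\<And>i j. D$i$j = D$j$i" using insert.prems(1) by blast
  have a: "0 < a" using st(1) sym insert by blast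
  have "crep outer Sc"
    using insert.IH[of Sc] st(3,4,5) sym insert.prems insert.hyps by blast
  moreover have "crep outer ((1/a) *\<^sub>R outer (D$k))" using a by (intro crep_single) simp
  ultimately have "crep outer (Sc + (1/a) *\<^sub>R outer (D$k))" by (rule crep_add)
  then show ?case by (simp add: Sc_def)
qed

abbreviation "intg \<equiv> (\<lambda>p. outer (rvec p))"

lemma continuous_outer: "isCont outer (w::real^'n::finite)"
proof -
  have "continuous_on UNIV (outer :: real^'n \<Rightarrow> _)"
    unfolding outer_def by (intro continuous_intros)
  then show ?thesis by (simp add: continuous_on_eq_continuous_at)
qed

lemma approx_outer:
  fixes w :: "real^'n::finite"
  assumes "0 < \<eta>"
  shows "\<exists>Y. crep intg Y \<and> norm (outer w - Y) < \<eta>"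
proof -
  obtain \<delta> where d: "0 < \<delta>" "\<And>x'. dist x' w < \<delta> \<Longrightarrow> dist (outer x') (outer w) < \<eta>"
    using continuous_outer[of w] assms unfolding continuous_at_eps_delta by blast
  obtain N :: nat where N: "real CARD('n) / \<delta> < real N" using reals_Archimedean2 by blast
  have "0 \<le> real CARD('n) / \<delta>" using d(1) by simp
  then have Npos: "0 < real N" using N by linarith
  define p :: "int^'n" where "p = (\<chi> i. \<lfloor>real N * w$i\<rfloor>)"
  define w' where "w' = (1 / real N) *\<^sub>R rvec p"
  have comp: "\<bar>(w' - w)$i\<bar> < 1 / real N" for i
  proof -
    have "(w' - w)$i = real_of_int \<lfloor>real N * w$i\<rfloor> / real N - w$i"
      by (simp add: w'_def p_def rvec_def)
    also have "\<dots> = (real_of_int \<lfloor>real N * w$i\<rfloor> - real N * w$i) / real N"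
      using Npos by (simp add: diff_divide_distrib)
    finally have "(w' - w)$i = (real_of_int \<lfloor>real N * w$i\<rfloor> - real N * w$i) / real N" .
    moreover have "\<bar>real_of_int \<lfloor>real N * w$i\<rfloor> - real N * w$i\<bar> < 1"
      using of_int_floor_le[of "real N * w$i"] real_of_int_floor_add_one_gt[of "real N * w$i"]
      by linarith
    ultimately show ?thesis using Npos by (simp add: abs_div divide_strict_right_mono)
  qed
  have "norm (w' - w) \<le> (\<Sum>i\<in>UNIV. \<bar>(w' - w)$i\<bar>)" by (rule norm_le_l1_cart)
  also have "\<dots> < (\<Sum>i\<in>(UNIV::'n set). 1 / real N)"
    using comp by (intro sum_strict_mono) auto
  also have "\<dots> = real CARD('n) / real N" by simp
  also have "\<dots> < \<delta>"
  proof -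
    have "real CARD('n) < real N * \<delta>" using N d(1) by (simp add: pos_divide_less_eq)
    then show ?thesis using Npos by (simp add: divide_less_eq mult.commute)
  qed
  finally have "dist w' w < \<delta>" by (simp add: dist_norm)
  then have "dist (outer w') (outer w) < \<eta>" by (rule d(2))
  moreover have "outer w' = (1 / real N)^2 *\<^sub>R intg p"
    unfolding vec_eq_iff w'_def by (simp add: power2_eq_square)
  then have "crep intg (outer w')" using crep_single[of "(1 / real N)^2" intg p] by simp
  ultimately show ?thesis
    by (intro exI[of _ "outer w'"]) (simp add: dist_norm norm_minus_commute)
qed

lemma approx_crep_sum:
  fixes c :: "real^'n::finite \<Rightarrow> real"
  assumes "finite S" 
  shows "(\<forall>a\<in>S. 0 \<le> c a) \<Longrightarrow> 0 < \<eta> \<Longrightarrow> \<exists>Y. crep intg Y \<and> norm ((\<Sum>a\<in>S. c a *\<^sub>R outer a) - Y) < \<eta>"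
  using assms
proof (induction S arbitrary: \<eta> rule: finite_induct)
  case empty
  then show ?case by (intro exI[of _ 0]) (auto intro: crep_zero)
next
  case (insert a S)
  have "0 < \<eta>/2" using insert by simp
  then obtain Y1 where Y1: "crep intg Y1" "norm ((\<Sum>a\<in>S. c a *\<^sub>R outer a) - Y1) < \<eta>/2"
    using insert by blast
  obtain Y2 where Y2: "crep intg Y2" "norm (outer (sqrt (c a) *\<^sub>R a) - Y2) < \<eta>/2"
    using approx_outer \<open>0 < \<eta>/2\<close> by blast
  have ca: "0 \<le> c a" using insert by simp
  have "outer (sqrt (c a) *\<^sub>R a) = c a *\<^sub>R outer a"
  proof -
    have sc: "sqrt (c a) * sqrt (c a) = c a" using ca by simp
    have "outer (sqrt (c a) *\<^sub>R a) $ i $ j = (sqrt (c a) * sqrt (c a)) * (a$i * a$j)" for i j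
      by (simp add: mult_ac)
    then show ?thesis unfolding sc by (simp add: vec_eq_iff)
  qed
  then have eq: "(\<Sum>a\<in>insert a S. c a *\<^sub>R outer a) - (Y2 + Y1)
      = (outer (sqrt (c a) *\<^sub>R a) - Y2) + ((\<Sum>a\<in>S. c a *\<^sub>R outer a) - Y1)"
    using insert.hyps by (simp add: algebra_simps)
  have "norm ((\<Sum>a\<in>insert a S. c a *\<^sub>R outer a) - (Y2 + Y1)) < \<eta>/2 + \<eta>/2"
    unfolding eq by (rule norm_add_less[OF Y2(2) Y1(2)])
  then show ?case using Y1(1) Y2(1) by (intro exI[of _ "Y2 + Y1"]) (auto intro: crep_add)
qed

lemma approx_crep:
  assumes "crep outer X" "0 < \<eta>"
  shows "\<exists>Y. crep intg Y \<and> norm (X - Y) < \<eta>"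
proof -
  obtain S c where "finite S" "\<forall>a\<in>S. 0 \<le> c a" "X = (\<Sum>a\<in>S. c a *\<^sub>R outer a)"
    using crepD[OF assms(1)] by blast
  then show ?thesis using approx_crep_sum assms(2) by blast
qed



lemma rvec_nth: "rvec p $ i = real_of_int (p $ i)"
  by (simp add: rvec_def)

lemma unitv_nth: "unitv i $ a = (if a = i then 1 else 0)"
  by (simp add: unitv_def)

lemma rvec_unitv[simp]: "rvec (unitv i) $ a = (if a = i then 1 else 0)"
  "rvec (unitv i + unitv j) $ a = (if a = i then 1 else 0) + (if a = j then 1 else 0)"
  "rvec (unitv i - unitv j) $ a = (if a = i then 1 else 0) - (if a = j then 1 else 0)"
  by (simp_all add: rvec_def unitv_def)

lemma dsum_delta:
  "(\<Sum>i\<in>(UNIV::'n::finite set). \<Sum>j\<in>(UNIV::'n set). if a = i then (if b = j then g i j else 0) else (0::real)) = g a b"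
  by simp

lemma diagdom:
  fixes M :: "real^'n::finite^'n"
  assumes sym: "\<And>i j. M$i$j = M$j$i"
    and dd: "\<And>i. (\<Sum>j\<in>UNIV. if j = i then 0 else \<bar>M$i$j\<bar>) \<le> M$i$i"
  shows "crep intg M"
proof -
  define \<alpha> where "\<alpha> i = M$i$i - (\<Sum>j\<in>UNIV. if j = i then 0 else \<bar>M$i$j\<bar>)" for i
  define pp where "pp i j = (if i = j then 0 else max (M$i$j) 0 / 2)" for i j
  define nn where "nn i j = (if i = j then 0 else max (- M$i$j) 0 / 2)" for i j
  define A where "A = (\<Sum>i\<in>UNIV. \<alpha> i *\<^sub>R intg (unitv i))"
  define B where "B = (\<Sum>i\<in>UNIV. \<Sum>j\<in>UNIV. pp i j *\<^sub>R intg (unitv i + unitv j))"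
  define C where "C = (\<Sum>i\<in>UNIV. \<Sum>j\<in>UNIV. nn i j *\<^sub>R intg (unitv i - unitv j))"
  have "crep intg A" unfolding A_def
    using dd by (intro crep_sum crep_single[of _ intg]) (auto simp: \<alpha>_def)
  moreover have "crep intg B" unfolding B_def
    by (intro crep_sum crep_single[of _ intg]) (auto simp: pp_def)
  moreover have "crep intg C" unfolding C_def
    by (intro crep_sum crep_single[of _ intg]) (auto simp: nn_def)
  ultimately have rep: "crep intg (A + B + C)" by (intro crep_add)
  have "M = A + B + C"
  proof (subst vec_eq_iff, intro allI, subst vec_eq_iff, intro allI)
    fix a b
    have "A$a$b = (\<Sum>x\<in>UNIV. if a = x then (if b = x then \<alpha> x else 0) else 0)"
      unfolding A_def sum_component by (intro sum.cong refl) auto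
    also have "\<dots> = (if a = b then \<alpha> a else 0)" by auto
    finally have Aab: "A$a$b = (if a = b then \<alpha> a else 0)" .
    have BCab: "B$a$b + C$a$b = (\<Sum>i\<in>UNIV. \<Sum>j\<in>UNIV.
        (if a = i then (if b = i then (if i = j then 0 else \<bar>M$i$j\<bar>/2) else 0) else 0)
      + (if a = j then (if b = j then (if i = j then 0 else \<bar>M$i$j\<bar>/2) else 0) else 0)
      + (if a = i then (if b = j then (if i = j then 0 else M$i$j/2) else 0) else 0)
      + (if a = j then (if b = i then (if i = j then 0 else M$i$j/2) else 0) else 0))" for a b
      unfolding B_def C_def sum_component sum.distrib[symmetric]
      by (intro sum.cong refl) (auto simp: pp_def nn_def max_def algebra_simps)
    show "M$a$b = (A + B + C)$a$b"
    proof (cases "a = b")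
      case True
      have "B$a$a + C$a$a = (\<Sum>j\<in>UNIV. if j = a then 0 else \<bar>M$a$j\<bar>/2) + (\<Sum>i\<in>UNIV. if i = a then 0 else \<bar>M$i$a\<bar>/2)"
        unfolding BCab by (simp add: sum.distrib eq_commute[of a])
      also have "(\<Sum>i\<in>UNIV. if i = a then 0 else \<bar>M$i$a\<bar>/2) = (\<Sum>j\<in>UNIV. if j = a then 0 else \<bar>M$a$j\<bar>/2)"
        by (intro sum.cong refl) (simp add: sym[of _ a])
      also have "(\<Sum>j\<in>UNIV. if j = a then 0 else \<bar>M$a$j\<bar>/2) + (\<Sum>j\<in>UNIV. if j = a then 0 else \<bar>M$a$j\<bar>/2)
          = (\<Sum>j\<in>UNIV. if j = a then 0 else \<bar>M$a$j\<bar>)"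
        unfolding sum.distrib[symmetric] by (intro sum.cong refl) auto
      finally have "B$a$a + C$a$a = (\<Sum>j\<in>UNIV. if j = a then 0 else \<bar>M$a$j\<bar>)" .
      moreover have bb: "b = a" using True by simp
      ultimately show ?thesis using Aab by (simp add: \<alpha>_def)
    next
      case False
      have "B$a$b + C$a$b = M$a$b"
        unfolding BCab using False sym[of b a] by (simp add: sum.distrib)
      then show ?thesis using False Aab by simp
    qed
  qed
  then show ?thesis using rep by simp
qed



lemma crep_intg_sym: "crep intg Y \<Longrightarrow> Y$i$j = Y$j$i"
  by (auto simp: crep_def sum_component mult.commute)

lemma entry_le_norm: "\<bar>(E::real^'n::finite^'n)$i$j\<bar> \<le> norm E"
proof -
  have "\<bar>E$i$j\<bar> \<le> norm (E$i)" by (rule component_le_norm_cart)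
  moreover have "norm (E$i) \<le> norm E" by (rule Finite_Cartesian_Product.norm_nth_le)
  ultimately show ?thesis by linarith
qed

lemma mat_nth: "(mat k :: real^'n::finite^'n) $ i $ j = (if i = j then k else 0)"
  by (simp add: mat_def)

lemma crep_int_shifted:
  fixes D :: "real^'n::finite^'n"
  assumes sym: "\<And>i j. D$i$j = D$j$i" and pos: "\<And>v. v \<bullet> v \<le> v \<bullet> (D *v v)"
  shows "crep intg (D - (1/2) *\<^sub>R mat 1)"
proof -
  define X where "X = D - (3/4) *\<^sub>R mat 1"
  have symX: "\<forall>i j. X$i$j = X$j$i" using sym by (simp add: X_def mat_nth)
  have "pd_on UNIV X (1/4)" unfolding pd_on_def
  proof (intro allI impI)
    fix v :: "real^'n"
    have "v \<bullet> (X *v v) = v \<bullet> (D *v v) - (3/4) * (v \<bullet> v)"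
      by (simp add: X_def matrix_vector_mult_diff_rdistrib scaleR_matrix_vector_assoc[symmetric]
          inner_diff_right)
    then show "1/4 * (v \<bullet> v) \<le> v \<bullet> (X *v v)" using pos[of v] by simp
  qed
  moreover have "supp_on UNIV X" by (simp add: supp_on_def)
  ultimately have "crep outer X" using chol[of UNIV X "1/4"] symX by simp
  define \<eta> :: real where "\<eta> = 1 / (8 * real CARD('n))"
  have eta: "0 < \<eta>" by (simp add: \<eta>_def)
  obtain Y where Y: "crep intg Y" "norm (X - Y) < \<eta>"
    using approx_crep[OF \<open>crep outer X\<close> eta] by blast
  define E where "E = X - Y"
  define M where "M = (1/4) *\<^sub>R mat 1 + E"
  have Ebd: "\<bar>E$i$j\<bar> < \<eta>" for i j using entry_le_norm[of E i j] Y(2) by (simp add: E_def)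
  have symM: "M$i$j = M$j$i" for i j
    using symX crep_intg_sym[OF Y(1)] by (simp add: M_def E_def mat_nth)
  have dd: "(\<Sum>j\<in>UNIV. if j = i then 0 else \<bar>M$i$j\<bar>) \<le> M$i$i" for i
  proof -
    have "(\<Sum>j\<in>UNIV. if j = i then 0 else \<bar>M$i$j\<bar>) \<le> (\<Sum>j\<in>(UNIV::'n set). \<eta>)"
      by (intro sum_mono) (auto simp: M_def mat_nth less_imp_le[OF Ebd] less_imp_le[OF eta])
    also have "\<dots> = real CARD('n) * \<eta>" by simp
    also have "\<dots> = 1/8" by (simp add: \<eta>_def)
    also have "\<dots> \<le> 1/4 - \<eta>"
    proof -
      have "1 \<le> real CARD('n)" by simp
      then have "\<eta> \<le> 1/8" unfolding \<eta>_def by (simp add: field_simps)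
      then show ?thesis by simp
    qed
    also have "\<dots> \<le> M$i$i" using Ebd[of i i] by (simp add: M_def mat_nth)
    finally show ?thesis .
  qed
  have "crep intg M" by (rule diagdom[OF symM dd])
  then have "crep intg (Y + M)" using Y(1) by (intro crep_add)
  moreover have "Y + M = D - (1/2) *\<^sub>R mat 1"
    by (simp add: M_def E_def X_def vec_eq_iff mat_nth)
  ultimately show ?thesis by simp
qed



lemma diffusion_on:
  assumes "finite T" "{y. Q y \<noteq> 0} \<subseteq> T"
  shows "diffusion_matrix Q $ i $ j = (1/2) * (\<Sum>y\<in>T. Q y * real_of_int (y$i) * real_of_int (y$j))"
proof -
  have "(\<Sum>y\<in>{y. Q y \<noteq> 0}. Q y * real_of_int (y$i) * real_of_int (y$j))
      = (\<Sum>y\<in>T. Q y * real_of_int (y$i) * real_of_int (y$j))"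
    using assms by (intro sum.mono_neutral_left) auto
  then show ?thesis by (simp add: diffusion_matrix_def)
qed

lemma unitv_inj: "unitv i = unitv j \<Longrightarrow> i = j"
proof -
  assume "unitv i = unitv j"
  then have "unitv i $ i = unitv j $ i" by simp
  then show "i = j" by (simp add: unitv_nth split: if_splits)
qed

lemma neg_mem_img: "(- (y::'a::group_add) \<in> uminus ` A) = (y \<in> A)"
  by (rule inj_image_mem_iff) (simp add: inj_def)

lemma mem_neg_img: "((y::'a::group_add) \<in> uminus ` A) = (- y \<in> A)"
  using neg_mem_img[of "- y" A] by simp

lemma unitv_neg: "unitv i \<noteq> - unitv j"
proof
  assume "unitv i = - unitv j"
  then have "unitv i $ i = (- unitv j) $ i" by simp
  then show False by (simp add: unitv_nth split: if_splits)
qed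

lemma matrix_part:
  fixes D :: "real^'d::finite^'d"
  assumes tr: "transpose D = D" and lo: "loewner_le (mat 1) D"
  shows "\<exists>Q. sep_rates Q \<and> diffusion_matrix Q = D \<and> (\<forall>i. 1/2 \<le> Q (unitv i))"
proof -
  have sym: "D$i$j = D$j$i" for i j
  proof -
    have "(transpose D)$i$j = D$j$i" by (simp add: transpose_def)
    then show ?thesis using tr by simp
  qed
  have pos: "v \<bullet> v \<le> v \<bullet> (D *v v)" for v
    using lo by (simp add: loewner_le_def)
  define D' where "D' = D - (1/2) *\<^sub>R mat 1"
  have "crep intg D'" unfolding D'_def by (rule crep_int_shifted[OF sym pos])
  then obtain S c where S: "finite S" "\<forall>a\<in>S. 0 \<le> c a" "D' = (\<Sum>a\<in>S. c a *\<^sub>R intg a)"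
    using crepD by blast
  define c' where "c' p = (if p \<in> S then c p else 0)" for p
  define U where "U = range unitv \<union> uminus ` range (unitv :: 'd \<Rightarrow> 'd site)"
  define q0 where "q0 y = (if y \<in> U then 1/2 else (0::real))" for y
  define Q where "Q y = c' y + c' (- y) + q0 y" for y
  define T where "T = S \<union> uminus ` S \<union> U"
  have finT: "finite T" using S(1) by (simp add: T_def U_def)
  have c'nn: "0 \<le> c' p" for p using S(2) by (simp add: c'_def)
  have Uneg: "(- y \<in> U) = (y \<in> U)" for y
    unfolding U_def by (auto simp: neg_mem_img mem_neg_img)
  have suppT: "{y. Q y \<noteq> 0} \<subseteq> T"
  proof
    fix y assume "y \<in> {y. Q y \<noteq> 0}"
    then have "Q y \<noteq> 0" by simp
    then have "y \<in> S \<or> -y \<in> S \<or> y \<in> U" by (auto simp: Q_def c'_def q0_def split: if_splits)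
    then show "y \<in> T" unfolding T_def by (auto simp: mem_neg_img)
  qed
  have sr: "sep_rates Q"
    unfolding sep_rates_def
  proof (intro conjI allI)
    fix y show "0 \<le> Q y" using c'nn[of y] c'nn[of "-y"] by (simp add: Q_def q0_def)
    show "Q y = Q (- y)" by (simp add: Q_def q0_def Uneg)
  next
    show "finite {y. Q y \<noteq> 0}" using finite_subset[OF suppT finT] .
  qed
  have half: "1/2 \<le> Q (unitv i)" for i
    using c'nn[of "unitv i"] c'nn[of "- unitv i"] by (simp add: Q_def q0_def U_def)
  have "diffusion_matrix Q $ i $ j = D $ i $ j" for i j
  proof -
    let ?f = "\<lambda>y::'d site. real_of_int (y$i) * real_of_int (y$j)"
    have T1: "(\<Sum>y\<in>T. c' y * ?f y) = D'$i$j"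
    proof -
      have "(\<Sum>y\<in>T. c' y * ?f y) = (\<Sum>y\<in>S. c y * ?f y)"
        using finT by (intro sum.mono_neutral_cong_right) (auto simp: T_def c'_def)
      also have "\<dots> = D'$i$j" by (simp add: S(3) sum_component rvec_nth)
      finally show ?thesis .
    qed
    have T2: "(\<Sum>y\<in>T. c' (- y) * ?f y) = (\<Sum>y\<in>T. c' y * ?f y)"
    proof (rule sum.reindex_bij_witness[where i=uminus and j=uminus])
      have "\<And>y. y \<in> T \<Longrightarrow> - y \<in> T" unfolding T_def using Uneg by (auto simp: mem_neg_img)
      then show "\<And>a. a \<in> T \<Longrightarrow> - a \<in> T" by blast
      then show "\<And>a. a \<in> T \<Longrightarrow> - a \<in> T" by blast
    qed auto
    have T3: "(\<Sum>y\<in>T. q0 y * ?f y) = (if i = j then 1 else 0)"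
    proof -
      have "(\<Sum>y\<in>T. q0 y * ?f y) = (\<Sum>y\<in>U. (1/2) * ?f y)"
        using finT by (intro sum.mono_neutral_cong_right) (auto simp: T_def q0_def)
      also have "\<dots> = (\<Sum>y\<in>range unitv. (1/2) * ?f y) + (\<Sum>y\<in>uminus ` range unitv. (1/2) * ?f y)"
        unfolding U_def by (rule sum.union_disjoint) (auto simp: unitv_neg)
      also have "(\<Sum>y\<in>range unitv. (1/2) * ?f y) = (\<Sum>k\<in>UNIV. (1/2) * ?f (unitv k))"
        by (rule sum.reindex_cong[where l=unitv]) (auto intro: inj_onI unitv_inj)
      also have "(\<Sum>y\<in>uminus ` range unitv. (1/2) * ?f y) = (\<Sum>k\<in>UNIV. (1/2) * ?f (- unitv k))"
        by (rule sum.reindex_cong[where l="\<lambda>k. - unitv k"]) (auto intro!: inj_onI dest: unitv_inj)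
      also have "(\<Sum>k\<in>UNIV. (1/2) * ?f (- unitv k)) = (\<Sum>k\<in>UNIV. (1/2) * ?f (unitv k))"
        by simp
      also have "(\<Sum>k\<in>UNIV. (1/2) * ?f (unitv k)) = (\<Sum>k\<in>UNIV. if i = k then (if j = k then 1/2 else 0) else 0)"
        by (intro sum.cong refl) (simp add: unitv_def)
      also have "\<dots> = (if j = i then 1/2 else 0)" by simp
      finally show ?thesis by simp
    qed
    have "diffusion_matrix Q $ i $ j = (1/2) * (\<Sum>y\<in>T. Q y * ?f y)"
      using diffusion_on[OF finT suppT] by (simp add: mult.assoc)
    also have "\<dots> = (1/2) * ((\<Sum>y\<in>T. c' y * ?f y) + (\<Sum>y\<in>T. c' (- y) * ?f y) + (\<Sum>y\<in>T. q0 y * ?f y))"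
      by (simp add: Q_def sum.distrib distrib_right)
    also have "\<dots> = D'$i$j + (1/2) * (if i = j then 1 else 0)"
      using T1 T2 T3 by simp
    also have "\<dots> = D$i$j" by (simp add: D'_def mat_nth)
    finally show ?thesis .
  qed
  then have "diffusion_matrix Q = D" by (simp add: vec_eq_iff)
  then show ?thesis using sr half by blast
qed



definition swp :: "'d::finite site \<Rightarrow> 'd site \<Rightarrow> 'd site \<Rightarrow> 'd site" where
  "swp x y z = (if z = x then y else if z = y then x else z)"

lemma exch_swp: "exch x y \<eta> = (\<lambda>z. \<eta> (swp x y z))"
  by (simp add: exch_def swp_def fun_eq_iff)

lemma exch_measurable: "exch x y \<in> measurable (bern \<rho>) (bern \<rho>)"
proof -
  have "(\<lambda>\<eta> z. \<eta> (swp x y z)) \<in> measurable (bern \<rho>) (bern \<rho>)"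
    unfolding bern_def
    by (rule measurable_PiM_single') (auto simp: space_PiM)
  then show ?thesis by (simp add: exch_swp[abs_def])
qed

lemma exch_distr: "distr (bern \<rho>) (bern \<rho>) (exch x y) = bern \<rho>"
proof -
  have inj: "inj_on (swp x y) UNIV" by (auto simp: inj_on_def swp_def split: if_splits)
  have "distr (\<Pi>\<^sub>M z\<in>UNIV. measure_pmf (bernoulli_pmf \<rho>)) (\<Pi>\<^sub>M z\<in>UNIV. measure_pmf (bernoulli_pmf \<rho>))
      (\<lambda>\<omega>. \<lambda>n\<in>UNIV. \<omega> (swp x y n)) = (\<Pi>\<^sub>M z\<in>UNIV. measure_pmf (bernoulli_pmf \<rho>))"
    using distr_PiM_reindex[of UNIV "\<lambda>_. measure_pmf (bernoulli_pmf \<rho>)" "swp x y" UNIV] inj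
    by (simp add: prob_space_measure_pmf)
  moreover have "(\<lambda>\<omega>. \<lambda>n\<in>UNIV. \<omega> (swp x y n)) = exch x y"
    by (simp add: exch_swp[abs_def] restrict_UNIV)
  ultimately show ?thesis by (simp add: bern_def)
qed

lemma nn_integral_exch:
  assumes "f \<in> borel_measurable (bern \<rho>)"
  shows "(\<integral>\<^sup>+\<eta>. f (exch x y \<eta>) \<partial>bern \<rho>) = (\<integral>\<^sup>+\<eta>. f \<eta> \<partial>bern \<rho>)"
proof -
  have "(\<integral>\<^sup>+\<eta>. f (exch x y \<eta>) \<partial>bern \<rho>) = integral\<^sup>N (distr (bern \<rho>) (bern \<rho>) (exch x y)) f"
    using assms by (intro nn_integral_distr[symmetric] exch_measurable) (simp add: exch_distr)
  then show ?thesis by (simp add: exch_distr)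
qed

lemma exch_comm: "exch x y = exch y x"
  by (auto simp: exch_def fun_eq_iff)

lemma exch_conj:
  assumes "x \<noteq> w" "w \<noteq> z" "x \<noteq> z"
  shows "exch w z (exch x w (exch w z \<eta>)) = exch x z \<eta>"
  using assms by (auto simp: exch_def fun_eq_iff)

lemma piF_decomp:
  assumes "x \<noteq> w" "w \<noteq> z" "x \<noteq> z"
  shows "piF x z F \<eta> = piF w z F (exch x w (exch w z \<eta>)) + piF x w F (exch w z \<eta>) + piF w z F \<eta>"
  using exch_conj[OF assms, of \<eta>] by (simp add: piF_def)

lemma young3:
  fixes a b c t :: real
  assumes "0 < t"
  shows "(a + b + c)^2 \<le> (1 + t) * b^2 + 2 * (1 + 1/t) * a^2 + 2 * (1 + 1/t) * c^2"
proof -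
  have "0 \<le> (t * b - (a + c))^2 / t" using assms by simp
  then have h1: "2 * b * (a + c) \<le> t * b^2 + (a + c)^2 / t"
    using assms by (simp add: power2_eq_square field_simps)
  have h2: "(a + c)^2 \<le> 2 * a^2 + 2 * c^2"
  proof -
    have "(a + c)^2 = 2 * a^2 + 2 * c^2 - (a - c)^2" by (simp add: power2_eq_square algebra_simps)
    moreover have "0 \<le> (a - c)^2" by simp
    ultimately show ?thesis by linarith
  qed
  have h3: "(a + c)^2 / t \<le> (2 * a^2 + 2 * c^2) / t"
    using h2 assms by (simp add: divide_right_mono)
  have "(a + b + c)^2 = b^2 + 2 * b * (a + c) + (a + c)^2"
    by (simp add: power2_eq_square algebra_simps)
  also have "\<dots> \<le> b^2 + t * b^2 + (2 * a^2 + 2 * c^2) / t + (2 * a^2 + 2 * c^2)"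
    using h1 h2 h3 by linarith
  also have "\<dots> = (1 + t) * b^2 + 2 * (1 + 1/t) * a^2 + 2 * (1 + 1/t) * c^2"
    using assms by (simp add: field_simps)
  finally show ?thesis .
qed



definition Iq :: "real \<Rightarrow> ('d::finite config \<Rightarrow> real) \<Rightarrow> 'd site \<Rightarrow> 'd site \<Rightarrow> ennreal" where
  "Iq \<rho> F x y = (\<integral>\<^sup>+\<eta>. ennreal ((piF x y F \<eta>)\<^sup>2) \<partial>bern \<rho>)"

lemma piF_meas:
  assumes "F \<in> borel_measurable (bern \<rho>)"
  shows "piF x y F \<in> borel_measurable (bern \<rho>)"
  unfolding piF_def[abs_def]
  by (intro borel_measurable_diff measurable_compose[OF exch_measurable assms] assms)

lemma sq_meas:
  assumes "F \<in> borel_measurable (bern \<rho>)" "g \<in> measurable (bern \<rho>) (bern \<rho>)"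
  shows "(\<lambda>\<eta>. ennreal (k * (piF x y F (g \<eta>))\<^sup>2)) \<in> borel_measurable (bern \<rho>)"
proof -
  have "(\<lambda>\<eta>. piF x y F (g \<eta>)) \<in> borel_measurable (bern \<rho>)"
    by (rule measurable_compose[OF assms(2) piF_meas[OF assms(1)]])
  then show ?thesis by measurable
qed

lemma Iq_sym: "Iq \<rho> F x y = Iq \<rho> F y x"
  by (simp add: Iq_def piF_def exch_comm)

lemma Iq_decomp:
  assumes Fm: "F \<in> borel_measurable (bern \<rho>)" and d: "x \<noteq> w" "w \<noteq> z" "x \<noteq> z" and t: "0 < t"
  shows "Iq \<rho> F x z \<le> ennreal (1 + t) * Iq \<rho> F x w + ennreal (4 * (1 + 1/t)) * Iq \<rho> F w z"
proof -
  let ?M = "bern \<rho>"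
  let ?s1 = "exch w z" and ?s2 = "exch x w"
  define k where "k = 2 * (1 + 1/t)"
  have k: "0 \<le> k" using t by (simp add: k_def)
  have m1: "?s1 \<in> measurable ?M ?M" and m2: "(\<lambda>\<eta>. ?s2 (?s1 \<eta>)) \<in> measurable ?M ?M"
    and m3: "(\<lambda>\<eta>. \<eta>) \<in> measurable ?M ?M"
    by (auto intro: measurable_compose[OF exch_measurable exch_measurable] exch_measurable)
  have pw: "ennreal ((piF x z F \<eta>)\<^sup>2) \<le>
      ennreal ((1 + t) * (piF x w F (?s1 \<eta>))\<^sup>2) + ennreal (k * (piF w z F (?s2 (?s1 \<eta>)))\<^sup>2)
      + ennreal (k * (piF w z F \<eta>)\<^sup>2)" for \<eta>
  proof -
    have "(piF x z F \<eta>)\<^sup>2 \<le> (1 + t) * (piF x w F (?s1 \<eta>))\<^sup>2 + k * (piF w z F (?s2 (?s1 \<eta>)))\<^sup>2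
        + k * (piF w z F \<eta>)\<^sup>2"
      unfolding piF_decomp[OF d, of F \<eta>] k_def using young3[OF t] by blast
    then show ?thesis using t k
      by (simp add: ennreal_plus[symmetric] del: ennreal_plus)
  qed
  have "Iq \<rho> F x z \<le> (\<integral>\<^sup>+\<eta>. ennreal ((1 + t) * (piF x w F (?s1 \<eta>))\<^sup>2) + ennreal (k * (piF w z F (?s2 (?s1 \<eta>)))\<^sup>2)
      + ennreal (k * (piF w z F \<eta>)\<^sup>2) \<partial>?M)"
    unfolding Iq_def by (intro nn_integral_mono pw)
  also have "\<dots> = (\<integral>\<^sup>+\<eta>. ennreal ((1 + t) * (piF x w F (?s1 \<eta>))\<^sup>2) \<partial>?M)
      + (\<integral>\<^sup>+\<eta>. ennreal (k * (piF w z F (?s2 (?s1 \<eta>)))\<^sup>2) \<partial>?M)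
      + (\<integral>\<^sup>+\<eta>. ennreal (k * (piF w z F \<eta>)\<^sup>2) \<partial>?M)"
    using sq_meas[OF Fm m1] sq_meas[OF Fm m2] sq_meas[OF Fm m3]
    by (simp add: nn_integral_add)
  also have "(\<integral>\<^sup>+\<eta>. ennreal ((1 + t) * (piF x w F (?s1 \<eta>))\<^sup>2) \<partial>?M) = ennreal (1 + t) * Iq \<rho> F x w"
  proof -
    have "(\<integral>\<^sup>+\<eta>. ennreal ((1 + t) * (piF x w F (?s1 \<eta>))\<^sup>2) \<partial>?M)
        = (\<integral>\<^sup>+\<eta>. ennreal (1 + t) * ennreal ((piF x w F (?s1 \<eta>))\<^sup>2) \<partial>?M)"
      using t by (simp add: ennreal_mult)
    also have "\<dots> = ennreal (1 + t) * (\<integral>\<^sup>+\<eta>. ennreal ((piF x w F (?s1 \<eta>))\<^sup>2) \<partial>?M)"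
      using sq_meas[OF Fm m1, of 1] by (simp add: nn_integral_cmult)
    also have "(\<integral>\<^sup>+\<eta>. ennreal ((piF x w F (?s1 \<eta>))\<^sup>2) \<partial>?M) = Iq \<rho> F x w"
      unfolding Iq_def using sq_meas[OF Fm m3, of 1 x w]
      by (subst nn_integral_exch[where f="\<lambda>\<eta>. ennreal ((piF x w F \<eta>)\<^sup>2)"]) simp_all
    finally show ?thesis .
  qed
  also have "(\<integral>\<^sup>+\<eta>. ennreal (k * (piF w z F (?s2 (?s1 \<eta>)))\<^sup>2) \<partial>?M) = ennreal k * Iq \<rho> F w z"
  proof -
    have "(\<integral>\<^sup>+\<eta>. ennreal (k * (piF w z F (?s2 (?s1 \<eta>)))\<^sup>2) \<partial>?M)
        = (\<integral>\<^sup>+\<eta>. ennreal k * ennreal ((piF w z F (?s2 (?s1 \<eta>)))\<^sup>2) \<partial>?M)"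
      using k by (simp add: ennreal_mult)
    also have "\<dots> = ennreal k * (\<integral>\<^sup>+\<eta>. ennreal ((piF w z F (?s2 (?s1 \<eta>)))\<^sup>2) \<partial>?M)"
      using sq_meas[OF Fm m2, of 1] by (simp add: nn_integral_cmult)
    also have "(\<integral>\<^sup>+\<eta>. ennreal ((piF w z F (?s2 (?s1 \<eta>)))\<^sup>2) \<partial>?M)
        = (\<integral>\<^sup>+\<eta>. ennreal ((piF w z F (?s2 \<eta>))\<^sup>2) \<partial>?M)"
      using sq_meas[OF Fm exch_measurable, of 1 w z x w]
      by (subst nn_integral_exch[where f="\<lambda>\<eta>. ennreal ((piF w z F (?s2 \<eta>))\<^sup>2)"]) simp_all
    also have "\<dots> = Iq \<rho> F w z"
      unfolding Iq_def using sq_meas[OF Fm m3, of 1 w z]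
      by (subst nn_integral_exch[where f="\<lambda>\<eta>. ennreal ((piF w z F \<eta>)\<^sup>2)"]) simp_all
    finally show ?thesis .
  qed
  also have "(\<integral>\<^sup>+\<eta>. ennreal (k * (piF w z F \<eta>)\<^sup>2) \<partial>?M) = ennreal k * Iq \<rho> F w z"
  proof -
    have "(\<integral>\<^sup>+\<eta>. ennreal (k * (piF w z F \<eta>)\<^sup>2) \<partial>?M)
        = (\<integral>\<^sup>+\<eta>. ennreal k * ennreal ((piF w z F \<eta>)\<^sup>2) \<partial>?M)"
      using k by (simp add: ennreal_mult)
    also have "\<dots> = ennreal k * Iq \<rho> F w z"
      unfolding Iq_def using sq_meas[OF Fm m3, of 1] by (simp add: nn_integral_cmult)
    finally show ?thesis .
  qed
  also have "ennreal (1 + t) * Iq \<rho> F x w + ennreal k * Iq \<rho> F w z + ennreal k * Iq \<rho> F w z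
      = ennreal (1 + t) * Iq \<rho> F x w + ennreal (4 * (1 + 1/t)) * Iq \<rho> F w z"
  proof -
    have "ennreal k + ennreal k = ennreal (4 * (1 + 1/t))"
      using k by (simp add: ennreal_plus[symmetric] k_def del: ennreal_plus)
    then show ?thesis by (simp add: add.assoc distrib_right[symmetric])
  qed
  finally show ?thesis .
qed



lemma ennsum[simp, intro]:
  fixes f :: "'a \<Rightarrow> ennreal"
  shows "f summable_on A"
  by (rule nonneg_summable_on_complete) simp

lemma ennreal_infsum_cmult:
  fixes f :: "'a \<Rightarrow> ennreal"
  shows "(\<Sum>\<^sub>\<infinity>x\<in>A. c * f x) = c * (\<Sum>\<^sub>\<infinity>x\<in>A. f x)"
  by (simp add: nonneg_infsum_complete SUP_mult_left_ennreal sum_distrib_left)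

lemma ennreal_sum_le_infsum:
  fixes f :: "'a \<Rightarrow> ennreal"
  assumes "finite B" "B \<subseteq> A"
  shows "sum f B \<le> infsum f A"
  using assms by (subst nonneg_infsum_complete) (auto intro: SUP_upper)

lemma infsum_le_finite_groups:
  fixes f :: "'a::ab_group_add \<times> 'a \<Rightarrow> ennreal"
  assumes V: "finite V" and z: "\<And>x y. y - x \<notin> V \<Longrightarrow> f (x, y) = 0"
  shows "infsum f UNIV \<le> (\<Sum>v\<in>V. infsum (\<lambda>x. f (x, x + v)) UNIV)"
proof -
  have "sum f F \<le> (\<Sum>v\<in>V. infsum (\<lambda>x. f (x, x + v)) UNIV)" if F: "finite F" for F
  proof -
    let ?S = "{p\<in>F. snd p - fst p \<in> V}"
    have "sum f F = sum f ?S"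
      using F z by (intro sum.mono_neutral_right) (auto simp: split_paired_all)
    also have "\<dots> = (\<Sum>v\<in>V. sum f {p\<in>?S. snd p - fst p = v})"
      using F V by (intro sum.group[symmetric]) auto
    also have "\<dots> \<le> (\<Sum>v\<in>V. infsum (\<lambda>x. f (x, x + v)) UNIV)"
    proof (intro sum_mono)
      fix v assume "v \<in> V"
      let ?T = "{p\<in>?S. snd p - fst p = v}"
      have inj: "inj_on fst ?T"
        by (auto simp: inj_on_def)
      have "sum f ?T = sum (\<lambda>x. f (x, x + v)) (fst ` ?T)"
      proof (subst sum.reindex[OF inj])
        show "sum f ?T = sum ((\<lambda>x. f (x, x + v)) \<circ> fst) ?T"
          by (intro sum.cong refl) (auto simp: algebra_simps)
      qed
      also have "\<dots> \<le> infsum (\<lambda>x. f (x, x + v)) UNIV"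
        using F by (intro ennreal_sum_le_infsum) auto
      finally show "sum f ?T \<le> infsum (\<lambda>x. f (x, x + v)) UNIV" .
    qed
    finally show ?thesis .
  qed
  then show ?thesis
    by (subst nonneg_infsum_complete) (auto intro: SUP_least)
qed

definition Ev :: "real \<Rightarrow> ('d::finite config \<Rightarrow> real) \<Rightarrow> 'd site \<Rightarrow> ennreal" where
  "Ev \<rho> F v = (\<Sum>\<^sub>\<infinity>x\<in>UNIV. Iq \<rho> F x (x + v))"

lemma infsum_shift:
  fixes g :: "'a::ab_group_add \<Rightarrow> ennreal"
  shows "(\<Sum>\<^sub>\<infinity>x\<in>UNIV. g (x + u)) = (\<Sum>\<^sub>\<infinity>x\<in>UNIV. g x)"
proof -
  have "bij_betw (\<lambda>x. x + u) UNIV UNIV"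
    by (rule bij_betwI[where g="\<lambda>x. x - u"]) auto
  then show ?thesis by (rule infsum_reindex_bij_betw)
qed

lemma Ev_decomp:
  assumes Fm: "F \<in> borel_measurable (bern \<rho>)" and d: "u \<noteq> 0" "v \<noteq> 0" "u \<noteq> v" and t: "0 < t"
  shows "Ev \<rho> F v \<le> ennreal (1 + t) * Ev \<rho> F u + ennreal (4 * (1 + 1/t)) * Ev \<rho> F (v - u)"
proof -
  have "Ev \<rho> F v \<le> (\<Sum>\<^sub>\<infinity>x\<in>UNIV. ennreal (1 + t) * Iq \<rho> F x (x + u) + ennreal (4 * (1 + 1/t)) * Iq \<rho> F (x + u) (x + v))"
    unfolding Ev_def
  proof (rule infsum_mono)
    fix x :: "'a site"
    show "Iq \<rho> F x (x + v) \<le> ennreal (1 + t) * Iq \<rho> F x (x + u) + ennreal (4 * (1 + 1/t)) * Iq \<rho> F (x + u) (x + v)"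
      using d by (intro Iq_decomp[OF Fm _ _ _ t]) auto
  qed (rule ennsum)+
  also have "\<dots> = ennreal (1 + t) * (\<Sum>\<^sub>\<infinity>x\<in>UNIV. Iq \<rho> F x (x + u)) + ennreal (4 * (1 + 1/t)) * (\<Sum>\<^sub>\<infinity>x\<in>UNIV. Iq \<rho> F (x + u) (x + v))"
    by (simp add: infsum_add ennreal_infsum_cmult)
  also have "(\<Sum>\<^sub>\<infinity>x\<in>UNIV. Iq \<rho> F (x + u) (x + v)) = Ev \<rho> F (v - u)"
  proof -
    have "(\<Sum>\<^sub>\<infinity>x\<in>UNIV. Iq \<rho> F (x + u) (x + v)) = (\<Sum>\<^sub>\<infinity>x\<in>UNIV. Iq \<rho> F (x + u) ((x + u) + (v - u)))"
      by (simp add: algebra_simps)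
    also have "\<dots> = Ev \<rho> F (v - u)" unfolding Ev_def
      by (rule infsum_shift[where g="\<lambda>y. Iq \<rho> F y (y + (v - u))"])
    finally show ?thesis .
  qed
  finally show ?thesis unfolding Ev_def by simp
qed

lemma Ev_neg: "Ev \<rho> F (- v) = Ev \<rho> F v"
proof -
  have "Ev \<rho> F (- v) = (\<Sum>\<^sub>\<infinity>x\<in>UNIV. Iq \<rho> F (x - v) ((x - v) + v))"
    unfolding Ev_def by (intro infsum_cong) (simp add: Iq_sym)
  also have "\<dots> = Ev \<rho> F v" unfolding Ev_def
    using infsum_shift[where g="\<lambda>y. Iq \<rho> F y (y + v)" and u="- v"] by simp
  finally show ?thesis .
qed

lemma exch_same: "exch x x \<eta> = \<eta>"
  by (auto simp: exch_def fun_eq_iff)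

lemma Ev_zero: "Ev \<rho> F 0 = 0"
  by (simp add: Ev_def Iq_def piF_def exch_same)

lemma Ev_unit: "Ev \<rho> F (unitv i) \<le> bond_energy \<rho> F"
proof -
  have "Ev \<rho> F (unitv i) = infsum (\<lambda>(x, i). Iq \<rho> F x (x + unitv i)) ((\<lambda>x. (x, i)) ` UNIV)"
    unfolding Ev_def by (subst infsum_reindex) (auto simp: inj_on_def o_def)
  also have "\<dots> \<le> infsum (\<lambda>(x, i). Iq \<rho> F x (x + unitv i)) UNIV"
    by (rule infsum_mono_neutral) (auto intro: ennsum)
  also have "\<dots> = bond_energy \<rho> F" by (simp add: bond_energy_def Iq_def)
  finally show ?thesis .
qed



lemma Ev_sign_unit:
  "Ev \<rho> F (if c then unitv i else - unitv i) \<le> bond_energy \<rho> F"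
  using Ev_unit[of \<rho> F i] Ev_neg[of \<rho> F "unitv i"] by auto

lemma ennreal_lin:
  assumes "0 \<le> a" "0 \<le> b" "0 \<le> c"
  shows "ennreal a * (ennreal b * B) + ennreal c * B = ennreal (a * b + c) * B"
proof -
  have "ennreal (a * b + c) = ennreal a * ennreal b + ennreal c"
    using assms by (simp add: ennreal_mult ennreal_plus)
  then show ?thesis by (simp add: distrib_right mult.assoc)
qed

lemma sum_abs_zero:
  fixes v :: "'d::finite site"
  assumes "(\<Sum>k\<in>UNIV. \<bar>v$k\<bar>) = 0"
  shows "v = 0"
proof -
  have "\<forall>k\<in>UNIV. \<bar>v$k\<bar> = 0"
    using assms by (subst sum_nonneg_eq_0_iff[symmetric]) auto
  then show ?thesis by (simp add: vec_eq_iff)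
qed

lemma Ev_bound_nat:
  assumes Fm: "F \<in> borel_measurable (bern \<rho>)"
  shows "(\<Sum>k\<in>UNIV. \<bar>v$k\<bar>) = int n \<Longrightarrow> Ev \<rho> F v \<le> ennreal (4 * (real n)^2) * bond_energy \<rho> F"
proof (induction n arbitrary: v)
  case 0
  then have "v = 0" by (intro sum_abs_zero) simp
  then show ?case by (simp add: Ev_zero)
next
  case (Suc n)
  have "v \<noteq> 0" using Suc.prems by auto
  then obtain i where vi: "v$i \<noteq> 0" by (auto simp: vec_eq_iff)
  define e :: "'a site" where "e = (if 0 < v$i then unitv i else - unitv i)"
  define u where "u = v - e"
  have e_nth: "e$k = (if k = i then (if 0 < v$i then 1 else -1) else 0)" for k
    by (simp add: e_def unitv_def)
  have uabs: "\<bar>u$k\<bar> = \<bar>v$k\<bar> - (if k = i then 1 else 0)" for k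
    using vi by (auto simp: u_def e_nth)
  have "(\<Sum>k\<in>UNIV. \<bar>u$k\<bar>) = (\<Sum>k\<in>UNIV. \<bar>v$k\<bar>) - 1"
    by (simp add: uabs sum_subtractf)
  then have un: "(\<Sum>k\<in>UNIV. \<bar>u$k\<bar>) = int n" using Suc.prems by simp
  have Ee: "Ev \<rho> F e \<le> bond_energy \<rho> F" unfolding e_def by (rule Ev_sign_unit)
  have vu: "v - u = e" by (simp add: u_def)
  show ?case
  proof (cases "n = 0")
    case True
    then have "u = 0" using un by (intro sum_abs_zero) simp
    then have "v = e" by (simp add: u_def)
    then have "Ev \<rho> F v \<le> 1 * bond_energy \<rho> F" using Ee by simp
    also have "\<dots> \<le> ennreal (4 * (real (Suc n))^2) * bond_energy \<rho> F"
      using True by (intro mult_right_mono) auto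
    finally show ?thesis .
  next
    case False
    then have npos: "0 < real n" by simp
    have "u \<noteq> 0" using un False by auto
    moreover have "u \<noteq> v" using vi by (auto simp: u_def vec_eq_iff e_nth)
    ultimately have "Ev \<rho> F v \<le> ennreal (1 + 1 / real n) * Ev \<rho> F u + ennreal (4 * (1 + 1 / (1 / real n))) * Ev \<rho> F (v - u)"
      using \<open>v \<noteq> 0\<close> npos by (intro Ev_decomp[OF Fm]) auto
    also have "\<dots> \<le> ennreal (1 + 1 / real n) * (ennreal (4 * (real n)^2) * bond_energy \<rho> F)
        + ennreal (4 * (1 + real n)) * bond_energy \<rho> F"
    proof (rule add_mono)
      show "ennreal (1 + 1 / real n) * Ev \<rho> F u \<le> ennreal (1 + 1 / real n) * (ennreal (4 * (real n)^2) * bond_energy \<rho> F)"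
        by (rule mult_left_mono[OF Suc.IH[OF un]]) simp
      have "1 / (1 / real n) = real n" by simp
      then show "ennreal (4 * (1 + 1 / (1 / real n))) * Ev \<rho> F (v - u) \<le> ennreal (4 * (1 + real n)) * bond_energy \<rho> F"
        unfolding vu using mult_left_mono[OF Ee, of "ennreal (4 * (1 + real n))"] by simp
    qed
    also have "\<dots> = ennreal ((1 + 1 / real n) * (4 * (real n)^2) + 4 * (1 + real n)) * bond_energy \<rho> F"
      using npos by (intro ennreal_lin) auto
    also have "(1 + 1 / real n) * (4 * (real n)^2) + 4 * (1 + real n) = 4 * (real (Suc n))^2"
    proof -
      have h: "1 / real n * (4 * (real n)^2) = 4 * real n" using npos by (simp add: power2_eq_square)
      have "(1 + 1 / real n) * (4 * (real n)^2) = 4 * (real n)^2 + 1 / real n * (4 * (real n)^2)"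
        by (simp add: distrib_right)
      also have "\<dots> = 4 * (real n)^2 + 4 * real n" by (simp only: h)
      finally show ?thesis by (simp add: power2_eq_square algebra_simps)
    qed
    finally show ?thesis .
  qed
qed

lemma Ev_bound:
  fixes v :: "'d::finite site"
  assumes Fm: "F \<in> borel_measurable (bern \<rho>)"
  shows "Ev \<rho> F v \<le> ennreal (4 * real CARD('d) * (\<Sum>k\<in>UNIV. (real_of_int (v$k))^2)) * bond_energy \<rho> F"
proof -
  define n where "n = nat (\<Sum>k\<in>UNIV. \<bar>v$k\<bar>)"
  have n: "(\<Sum>k\<in>UNIV. \<bar>v$k\<bar>) = int n" unfolding n_def by (simp add: sum_nonneg)
  have "Ev \<rho> F v \<le> ennreal (4 * (real n)^2) * bond_energy \<rho> F" by (rule Ev_bound_nat[OF Fm n])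
  also have "\<dots> \<le> ennreal (4 * real CARD('d) * (\<Sum>k\<in>UNIV. (real_of_int (v$k))^2)) * bond_energy \<rho> F"
  proof (intro mult_right_mono ennreal_leI)
    have "real n = (\<Sum>k\<in>UNIV. \<bar>real_of_int (v$k)\<bar>)"
    proof -
      have "real n = real_of_int (\<Sum>k\<in>UNIV. \<bar>v$k\<bar>)" using n by simp
      also have "\<dots> = (\<Sum>k\<in>UNIV. \<bar>real_of_int (v$k)\<bar>)" by simp
      finally show ?thesis .
    qed
    then have "(real n)^2 \<le> (\<Sum>k\<in>UNIV. (\<bar>real_of_int (v$k)\<bar>)^2) * real CARD('d)"
      using sum_squared_le_sum_of_squares[of "\<lambda>k. \<bar>real_of_int (v$k)\<bar>" UNIV] by simp
    then show "4 * (real n)^2 \<le> 4 * real CARD('d) * (\<Sum>k\<in>UNIV. (real_of_int (v$k))^2)"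
      by (simp add: mult_ac)
  qed auto
  finally show ?thesis .
qed



lemma bond_energy_Iq: "bond_energy \<rho> F = (\<Sum>\<^sub>\<infinity>(x, i)\<in>UNIV. Iq \<rho> F x (x + unitv i))"
  by (simp add: bond_energy_def Iq_def)

lemma sep_form_Iq: "sep_form Q \<rho> F = (\<Sum>\<^sub>\<infinity>(x, y)\<in>UNIV. ennreal (Q (y - x) / 4) * Iq \<rho> F x y)"
  by (simp add: sep_form_def Iq_def)

lemma first_ineq:
  fixes Q :: "'d::finite site \<Rightarrow> real"
  assumes sr: "sep_rates Q" and half: "\<And>i. 1/2 \<le> Q (unitv i)"
  shows "ennreal (1/8) * bond_energy \<rho> F \<le> sep_form Q \<rho> F"
proof -
  define h :: "'d site \<times> 'd \<Rightarrow> 'd site \<times> 'd site" where "h = (\<lambda>(x, i). (x, x + unitv i))"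
  have inj: "inj_on h UNIV"
    by (auto simp: inj_on_def h_def dest: unitv_inj)
  have "ennreal (1/8) * bond_energy \<rho> F = (\<Sum>\<^sub>\<infinity>(x, i)\<in>UNIV. ennreal (1/8) * Iq \<rho> F x (x + unitv i))"
    unfolding bond_energy_Iq by (subst ennreal_infsum_cmult[symmetric]) (simp add: case_prod_unfold)
  also have "\<dots> \<le> (\<Sum>\<^sub>\<infinity>p\<in>UNIV. ((\<lambda>(x, y). ennreal (Q (y - x) / 4) * Iq \<rho> F x y) \<circ> h) p)"
  proof (rule infsum_mono)
    fix p :: "'d site \<times> 'd"
    obtain x i where p: "p = (x, i)" by (cases p)
    have "ennreal (1/8) \<le> ennreal (Q (unitv i) / 4)" using half[of i] by (intro ennreal_leI) simp
    then show "(case p of (x, i) \<Rightarrow> ennreal (1/8) * Iq \<rho> F x (x + unitv i))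
        \<le> ((\<lambda>(x, y). ennreal (Q (y - x) / 4) * Iq \<rho> F x y) \<circ> h) p"
      by (simp add: p h_def mult_right_mono)
  qed (rule ennsum)+
  also have "\<dots> = (\<Sum>\<^sub>\<infinity>p\<in>h ` UNIV. (\<lambda>(x, y). ennreal (Q (y - x) / 4) * Iq \<rho> F x y) p)"
    by (rule infsum_reindex[OF inj, symmetric])
  also have "\<dots> \<le> (\<Sum>\<^sub>\<infinity>p\<in>UNIV. (\<lambda>(x, y). ennreal (Q (y - x) / 4) * Iq \<rho> F x y) p)"
    by (rule infsum_mono_neutral) (auto intro: ennsum)
  also have "\<dots> = sep_form Q \<rho> F" by (simp add: sep_form_Iq)
  finally show ?thesis .
qed

lemma nearest_unit: "nearest x (x + unitv i)"
proof -
  have "(\<Sum>k\<in>UNIV. \<bar>x $ k - (x + unitv i) $ k\<bar>) = (\<Sum>k\<in>UNIV. if k = i then 1 else 0)"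
    by (intro sum.cong refl) (simp add: unitv_def)
  then show ?thesis by (simp add: nearest_def)
qed

lemma bond_le_ng:
  assumes adm: "admissible_rates lam r c"
  shows "bond_energy \<rho> F \<le> 2 * ng_form c \<rho> F"
proof -
  have c1: "1 \<le> c x (x + unitv i) \<eta>" for x i \<eta>
    using adm nearest_unit[of x i] unfolding admissible_rates_def by blast
  have "bond_energy \<rho> F \<le> (\<Sum>\<^sub>\<infinity>(x, i)\<in>UNIV.
      (\<integral>\<^sup>+ \<eta>. ennreal (c x (x + unitv i) \<eta> * (piF x (x + unitv i) F \<eta>)\<^sup>2) \<partial>bern \<rho>))"
    unfolding bond_energy_def
  proof (rule infsum_mono)
    fix p :: "'a site \<times> 'a"
    obtain x i where p: "p = (x, i)" by (cases p)
    have "ennreal ((piF x (x + unitv i) F \<eta>)\<^sup>2) \<le> ennreal (c x (x + unitv i) \<eta> * (piF x (x + unitv i) F \<eta>)\<^sup>2)" for \<eta>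
    proof (rule ennreal_leI)
      show "(piF x (x + unitv i) F \<eta>)\<^sup>2 \<le> c x (x + unitv i) \<eta> * (piF x (x + unitv i) F \<eta>)\<^sup>2"
        using c1[of x i \<eta>] mult_right_mono[of 1 "c x (x + unitv i) \<eta>" "(piF x (x + unitv i) F \<eta>)\<^sup>2"] by simp
    qed
    then show "(case p of (x, i) \<Rightarrow> \<integral>\<^sup>+ \<eta>. ennreal ((piF x (x + unitv i) F \<eta>)\<^sup>2) \<partial>bern \<rho>)
        \<le> (case p of (x, i) \<Rightarrow> \<integral>\<^sup>+ \<eta>. ennreal (c x (x + unitv i) \<eta> * (piF x (x + unitv i) F \<eta>)\<^sup>2) \<partial>bern \<rho>)"
      by (simp add: p nn_integral_mono)
  qed (rule ennsum)+
  also have "\<dots> = 2 * ng_form c \<rho> F"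
  proof -
    have "2 * ennreal (1/2) = 1"
    proof -
      have "ennreal 2 * ennreal (1/2) = ennreal (2 * (1/2))" by (rule ennreal_mult[symmetric]) simp_all
      then show ?thesis by simp
    qed
    then show ?thesis unfolding ng_form_def
      by (subst ennreal_infsum_cmult[symmetric]) (simp add: case_prod_unfold mult.assoc[symmetric])
  qed
  finally show ?thesis .
qed



lemma diag_le_lam:
  fixes D :: "real^'d::finite^'d"
  assumes lo: "loewner_le D (lam *\<^sub>R mat 1)"
  shows "D$k$k \<le> lam"
proof -
  define e :: "real^'d" where "e = (\<chi> i. if i = k then 1 else 0)"
  have "e \<bullet> (D *v e) \<le> e \<bullet> ((lam *\<^sub>R mat 1) *v e)" using lo by (simp add: loewner_le_def)
  moreover have "e \<bullet> (D *v e) = D$k$k" by (simp add: qf_expand e_def)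
  moreover have "e \<bullet> ((lam *\<^sub>R mat 1) *v e) = lam"
  proof -
    have "(lam *\<^sub>R mat 1) *v e = lam *\<^sub>R e"
      by (simp add: scaleR_matrix_vector_assoc[symmetric])
    moreover have "e \<bullet> e = 1" by (simp add: inner_expand e_def)
    ultimately show ?thesis by simp
  qed
  ultimately show ?thesis by simp
qed

lemma ennmul:
  assumes "0 \<le> a" "0 \<le> b"
  shows "ennreal a * (ennreal b * B) = ennreal (a * b) * B"
  using assms by (simp add: ennreal_mult mult.assoc)

lemma second_ineq:
  fixes Q :: "'d::finite site \<Rightarrow> real" and D :: "real^'d^'d"
  assumes Fm: "F \<in> borel_measurable (bern \<rho>)" and sr: "sep_rates Q" and dm: "diffusion_matrix Q = D"
    and lo: "loewner_le D (lam *\<^sub>R mat 1)" and adm: "admissible_rates lam r c"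
  shows "sep_form Q \<rho> F \<le> ennreal (4 * real CARD('d)^2 * lam) * ng_form c \<rho> F"
proof -
  define V where "V = {v. Q v \<noteq> 0}"
  have finV: "finite V" using sr by (simp add: sep_rates_def V_def)
  have Qnn: "0 \<le> Q v" for v using sr by (simp add: sep_rates_def)
  define B where "B = bond_energy \<rho> F"
  define d where "d = real CARD('d)"
  define sq where "sq v = (\<Sum>k\<in>UNIV. (real_of_int (v$k))^2)" for v :: "'d site"
  have "sep_form Q \<rho> F \<le> (\<Sum>v\<in>V. infsum (\<lambda>x. (\<lambda>(x, y). ennreal (Q (y - x) / 4) * Iq \<rho> F x y) (x, x + v)) UNIV)"
    unfolding sep_form_Iq by (rule infsum_le_finite_groups[OF finV]) (simp add: V_def)
  also have "\<dots> = (\<Sum>v\<in>V. ennreal (Q v / 4) * Ev \<rho> F v)"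
    by (simp add: Ev_def ennreal_infsum_cmult)
  also have "\<dots> \<le> (\<Sum>v\<in>V. ennreal (Q v / 4) * (ennreal (4 * d * sq v) * B))"
    unfolding B_def d_def sq_def
    by (intro sum_mono mult_left_mono Ev_bound[OF Fm]) simp
  also have "\<dots> = (\<Sum>v\<in>V. ennreal (Q v / 4 * (4 * d * sq v)) * B)"
  proof (intro sum.cong refl ennmul)
    fix v show "0 \<le> Q v / 4" using Qnn[of v] by simp
    show "0 \<le> 4 * d * sq v" by (simp add: d_def sq_def sum_nonneg)
  qed
  also have "\<dots> = ennreal (\<Sum>v\<in>V. Q v / 4 * (4 * d * sq v)) * B"
    by (simp add: sum_distrib_right[symmetric] Qnn d_def sq_def sum_nonneg)
  also have "\<dots> \<le> ennreal (2 * d^2 * lam) * B"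
  proof (intro mult_right_mono ennreal_leI)
    have dk: "(\<Sum>v\<in>V. Q v * (real_of_int (v$k))^2) = 2 * D$k$k" for k
      using dm[symmetric] by (simp add: diffusion_matrix_def V_def power2_eq_square mult.assoc)
    have "(\<Sum>v\<in>V. Q v / 4 * (4 * d * sq v)) = d * (\<Sum>k\<in>UNIV. \<Sum>v\<in>V. Q v * (real_of_int (v$k))^2)"
      by (simp add: sq_def sum_distrib_left sum_distrib_right mult_ac sum.swap[of _ V])
    also have "\<dots> = d * (\<Sum>k\<in>UNIV. 2 * D$k$k)" by (simp add: dk)
    also have "\<dots> \<le> d * (\<Sum>k\<in>(UNIV::'d set). 2 * lam)"
      using diag_le_lam[OF lo] by (intro mult_left_mono sum_mono) (auto simp: d_def)
    also have "\<dots> = 2 * d^2 * lam" by (simp add: d_def power2_eq_square)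
    finally show "(\<Sum>v\<in>V. Q v / 4 * (4 * d * sq v)) \<le> 2 * d^2 * lam" .
  qed simp
  also have "\<dots> \<le> ennreal (2 * d^2 * lam) * (2 * ng_form c \<rho> F)"
    unfolding B_def by (intro mult_left_mono bond_le_ng[OF adm]) simp
  also have "\<dots> = ennreal (4 * d^2 * lam) * ng_form c \<rho> F"
  proof (cases "0 \<le> lam")
    case True
    have "ennreal (2 * d^2 * lam) * ennreal 2 = ennreal (2 * d^2 * lam * 2)"
      using True by (intro ennreal_mult[symmetric]) (simp_all add: d_def)
    also have "2 * d^2 * lam * 2 = 4 * d^2 * lam" by simp
    finally have "ennreal (2 * d^2 * lam) * 2 = ennreal (4 * d^2 * lam)" by simp
    then show ?thesis by (simp add: mult.assoc[symmetric])
  next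
    case False
    then have "2 * d^2 * lam \<le> 0" "4 * d^2 * lam \<le> 0"
      by (simp_all add: d_def mult_nonneg_nonpos)
    then have "ennreal (2 * d^2 * lam) = 0" "ennreal (4 * d^2 * lam) = 0"
      by (simp_all only: ennreal_neg)
    then show ?thesis by simp
  qed
  finally show ?thesis by (simp add: d_def)
qed

theorem corollary2p3:
  fixes lam :: real
  shows "\<exists>C::real. \<forall>D :: real ^ 'd::finite ^ 'd.
     transpose D = D \<and> loewner_le (mat 1) D \<and> loewner_le D (lam *\<^sub>R mat 1) \<longrightarrow>
     (\<exists>Q :: 'd site \<Rightarrow> real. sep_rates Q \<and> diffusion_matrix Q = D \<and>
        (\<forall>\<rho> r c F. 0 < \<rho> \<and> \<rho> < 1 \<and> admissible_rates lam r c \<and> L2 \<rho> F \<longrightarrow>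
            ennreal (1/8) * bond_energy \<rho> F \<le> sep_form Q \<rho> F
          \<and> sep_form Q \<rho> F \<le> ennreal C * ng_form c \<rho> F))"
proof (intro exI[of _ "4 * real CARD('d)^2 * lam"] allI impI)
  fix D :: "real ^ 'd ^ 'd"
  assume H: "transpose D = D \<and> loewner_le (mat 1) D \<and> loewner_le D (lam *\<^sub>R mat 1)"
  obtain Q where Q: "sep_rates Q" "diffusion_matrix Q = D" "\<And>i. 1/2 \<le> Q (unitv i)"
    using matrix_part[of D] H by blast
  show "\<exists>Q :: 'd site \<Rightarrow> real. sep_rates Q \<and> diffusion_matrix Q = D \<and>
        (\<forall>\<rho> r c F. 0 < \<rho> \<and> \<rho> < 1 \<and> admissible_rates lam r c \<and> L2 \<rho> F \<longrightarrow>
            ennreal (1/8) * bond_energy \<rho> F \<le> sep_form Q \<rho> F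
          \<and> sep_form Q \<rho> F \<le> ennreal (4 * real CARD('d)^2 * lam) * ng_form c \<rho> F)"
  proof (intro exI[of _ Q] conjI allI impI)
    show "sep_rates Q" "diffusion_matrix Q = D" using Q by auto
  next
    fix \<rho> :: real and r :: real and c :: "'d site \<Rightarrow> 'd site \<Rightarrow> 'd config \<Rightarrow> real"
      and F :: "'d config \<Rightarrow> real"
    assume A: "0 < \<rho> \<and> \<rho> < 1 \<and> admissible_rates lam r c \<and> L2 \<rho> F"
    show "ennreal (1/8) * bond_energy \<rho> F \<le> sep_form Q \<rho> F"
      by (rule first_ineq[OF Q(1) Q(3)])
    have Fm: "F \<in> borel_measurable (bern \<rho>)" using A by (simp add: L2_def)
    show "sep_form Q \<rho> F \<le> ennreal (4 * real CARD('d)^2 * lam) * ng_form c \<rho> F"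
      using second_ineq[OF Fm Q(1) Q(2)] H A by blast
  qed
qed


end
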